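(* Let $R$ be a ring and $n\ge 2$. Then $R$ is almost Armendariz if and only if $R[x]/\langle x^n\rangle$ is almost Armendariz.
   Context: All rings are associative with identity. For a ring $R$, $P(R)$ denotes the prime radical of $R$ (the intersection of all prime ideals of $R$, equivalently the set of strongly nilpotent elements of $R$). A ring $R$ is called almost Armendariz if whenever $f(x)=\sum_{i=0}^m a_ix^i$ and $g(x)=\sum_{j=0}^n b_jx^j\in R[x]$ satisfy $f(x)g(x)=0$, then $a_ib_j\in P(R)$ for all $0\le i\le m$, $0\le j\le n$. $\langle x^n\rangle$ is the ideal of $R[x]$ generated by $x^n$. *)

theory Defs
  imports "HOL-Algebra.Algebra"
begin

definition nc_prime_ideal :: "('a, 'b) ring_scheme \<Rightarrow> 'a set \<Rightarrow> bool" where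
  "nc_prime_ideal R P \<longleftrightarrow> ideal P R \<and> P \<noteq> carrier R \<and>
     (\<forall>A B. ideal A R \<longrightarrow> ideal B R \<longrightarrow>
        (\<forall>a\<in>A. \<forall>b\<in>B. a \<otimes>\<^bsub>R\<^esub> b \<in> P) \<longrightarrow> A \<subseteq> P \<or> B \<subseteq> P)"

text \<open>Prime radical: intersection of all prime ideals (the whole ring if there are none).\<close>
definition prime_radical :: "('a, 'b) ring_scheme \<Rightarrow> 'a set" where
  "prime_radical R = {a \<in> carrier R. \<forall>P. nc_prime_ideal R P \<longrightarrow> a \<in> P}"

definition almost_armendariz :: "('a, 'b) ring_scheme \<Rightarrow> bool" where
  "almost_armendariz R \<longleftrightarrow>
     (\<forall>f \<in> carrier (UP R). \<forall>g \<in> carrier (UP R).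
        f \<otimes>\<^bsub>UP R\<^esub> g = \<zero>\<^bsub>UP R\<^esub> \<longrightarrow>
        (\<forall>i \<le> deg R f. \<forall>j \<le> deg R g.
           coeff (UP R) f i \<otimes>\<^bsub>R\<^esub> coeff (UP R) g j \<in> prime_radical R))"

definition trunc_poly_ring :: "('a, 'b) ring_scheme \<Rightarrow> nat \<Rightarrow> (nat \<Rightarrow> 'a) set ring" where
  "trunc_poly_ring R n = (UP R) Quot (genideal (UP R) {monom (UP R) \<one>\<^bsub>R\<^esub> n})"

end

theory Submission
  imports Defs
begin


lemma img_ideal:
  assumes hom: "ring_hom_ring A B h" and surj: "h ` carrier A = carrier B" and I: "ideal I A"
  shows "ideal (h ` I) B"
proof -
  interpret H: ring_hom_ring A B h by fact
  have Ic: "I \<subseteq> carrier A" using ideal.axioms(1)[OF I] additive_subgroup.a_subset by blast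
  show ?thesis
  proof (rule idealI)
    show "ring B" by (rule H.S.ring_axioms)
    show "subgroup (h ` I) (add_monoid B)"
      using H.img_is_add_subgroup[OF additive_subgroup.a_subgroup[OF ideal.axioms(1)[OF I]]] .
  next
    fix a x assume a: "a \<in> h ` I" and x: "x \<in> carrier B"
    obtain s where s: "s \<in> I" "a = h s" using a by blast
    obtain t where t: "t \<in> carrier A" "x = h t" using x surj by (metis imageE)
    have sc: "s \<in> carrier A" using s Ic by blast
    have "x \<otimes>\<^bsub>B\<^esub> a = h (t \<otimes>\<^bsub>A\<^esub> s)" using s t sc by simp
    moreover have "t \<otimes>\<^bsub>A\<^esub> s \<in> I" using ideal.I_l_closed[OF I s(1) t(1)] .
    ultimately show "x \<otimes>\<^bsub>B\<^esub> a \<in> h ` I" by blast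
    have "a \<otimes>\<^bsub>B\<^esub> x = h (s \<otimes>\<^bsub>A\<^esub> t)" using s t sc by simp
    moreover have "s \<otimes>\<^bsub>A\<^esub> t \<in> I" using ideal.I_r_closed[OF I s(1) t(1)] .
    ultimately show "a \<otimes>\<^bsub>B\<^esub> x \<in> h ` I" by blast
  qed
qed

lemma prime_vimage:
  assumes hom: "ring_hom_ring A B h" and surj: "h ` carrier A = carrier B"
    and P: "nc_prime_ideal B P"
  shows "nc_prime_ideal A {a \<in> carrier A. h a \<in> P}"
proof -
  interpret H: ring_hom_ring A B h by fact
  have Pi: "ideal P B" and Pne: "P \<noteq> carrier B"
    and Pp: "\<And>I J. ideal I B \<Longrightarrow> ideal J B \<Longrightarrow> (\<forall>a\<in>I. \<forall>b\<in>J. a \<otimes>\<^bsub>B\<^esub> b \<in> P) \<Longrightarrow> I \<subseteq> P \<or> J \<subseteq> P"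
    using P unfolding nc_prime_ideal_def by blast+
  have "ideal {a \<in> carrier A. h a \<in> P} A" by (rule H.ideal_vimage[OF Pi])
  moreover have "{a \<in> carrier A. h a \<in> P} \<noteq> carrier A"
  proof
    assume "{a \<in> carrier A. h a \<in> P} = carrier A"
    hence "h \<one>\<^bsub>A\<^esub> \<in> P" by blast
    hence "\<one>\<^bsub>B\<^esub> \<in> P" by simp
    hence "P = carrier B" by (rule ideal.one_imp_carrier[OF Pi])
    with Pne show False ..
  qed
  moreover have "\<forall>I J. ideal I A \<longrightarrow> ideal J A \<longrightarrow>
        (\<forall>a\<in>I. \<forall>b\<in>J. a \<otimes>\<^bsub>A\<^esub> b \<in> {a \<in> carrier A. h a \<in> P}) \<longrightarrow>
        I \<subseteq> {a \<in> carrier A. h a \<in> P} \<or> J \<subseteq> {a \<in> carrier A. h a \<in> P}"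
  proof (intro allI impI)
    fix I J assume I: "ideal I A" and J: "ideal J A"
      and prod: "\<forall>a\<in>I. \<forall>b\<in>J. a \<otimes>\<^bsub>A\<^esub> b \<in> {a \<in> carrier A. h a \<in> P}"
    have Ic: "I \<subseteq> carrier A" using ideal.axioms(1)[OF I] additive_subgroup.a_subset by blast
    have Jc: "J \<subseteq> carrier A" using ideal.axioms(1)[OF J] additive_subgroup.a_subset by blast
    have "\<forall>x\<in>h ` I. \<forall>y\<in>h ` J. x \<otimes>\<^bsub>B\<^esub> y \<in> P"
    proof (intro ballI)
      fix x y assume "x \<in> h ` I" "y \<in> h ` J"
      then obtain a b where ab: "a \<in> I" "b \<in> J" "x = h a" "y = h b" by blast
      have "a \<in> carrier A" "b \<in> carrier A" using ab Ic Jc by auto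
      hence "x \<otimes>\<^bsub>B\<^esub> y = h (a \<otimes>\<^bsub>A\<^esub> b)" using ab by simp
      thus "x \<otimes>\<^bsub>B\<^esub> y \<in> P" using prod ab by auto
    qed
    hence "h ` I \<subseteq> P \<or> h ` J \<subseteq> P"
      using Pp img_ideal[OF hom surj I] img_ideal[OF hom surj J] by blast
    thus "I \<subseteq> {a \<in> carrier A. h a \<in> P} \<or> J \<subseteq> {a \<in> carrier A. h a \<in> P}"
      using Ic Jc by blast
  qed
  ultimately show ?thesis unfolding nc_prime_ideal_def by blast
qed

lemma back_mem:
  assumes hom: "ring_hom_ring A B h" and Q: "ideal Q A"
    and ker: "\<And>a. a \<in> carrier A \<Longrightarrow> h a = \<zero>\<^bsub>B\<^esub> \<Longrightarrow> a \<in> Q"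
    and a: "a \<in> carrier A" and ha: "h a \<in> h ` Q"
  shows "a \<in> Q"
proof -
  interpret H: ring_hom_ring A B h by fact
  have Qc: "Q \<subseteq> carrier A" using ideal.axioms(1)[OF Q] additive_subgroup.a_subset by blast
  obtain q where q: "q \<in> Q" "h a = h q" using ha by blast
  have qc: "q \<in> carrier A" using q Qc by blast
  have "h (a \<ominus>\<^bsub>A\<^esub> q) = \<zero>\<^bsub>B\<^esub>" using a qc q by (simp add: a_minus_def H.S.r_neg)
  hence "a \<ominus>\<^bsub>A\<^esub> q \<in> Q" using ker a qc by simp
  hence "(a \<ominus>\<^bsub>A\<^esub> q) \<oplus>\<^bsub>A\<^esub> q \<in> Q"
    using additive_subgroup.a_closed[OF ideal.axioms(1)[OF Q]] q by blast
  moreover have "(a \<ominus>\<^bsub>A\<^esub> q) \<oplus>\<^bsub>A\<^esub> q = a" using a qc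
    by (simp add: a_minus_def H.R.a_assoc H.R.l_neg)
  ultimately show ?thesis by simp
qed

lemma prime_img:
  assumes hom: "ring_hom_ring A B h" and surj: "h ` carrier A = carrier B"
    and Q: "nc_prime_ideal A Q"
    and ker: "\<And>a. a \<in> carrier A \<Longrightarrow> h a = \<zero>\<^bsub>B\<^esub> \<Longrightarrow> a \<in> Q"
  shows "nc_prime_ideal B (h ` Q)"
proof -
  interpret H: ring_hom_ring A B h by fact
  have Qi: "ideal Q A" and Qne: "Q \<noteq> carrier A"
    and Qp: "\<And>I J. ideal I A \<Longrightarrow> ideal J A \<Longrightarrow> (\<forall>a\<in>I. \<forall>b\<in>J. a \<otimes>\<^bsub>A\<^esub> b \<in> Q) \<Longrightarrow> I \<subseteq> Q \<or> J \<subseteq> Q"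
    using Q unfolding nc_prime_ideal_def by blast+
  note bk = back_mem[OF hom Qi ker]
  have "ideal (h ` Q) B" by (rule img_ideal[OF hom surj Qi])
  moreover have "h ` Q \<noteq> carrier B"
  proof
    assume "h ` Q = carrier B"
    hence "h \<one>\<^bsub>A\<^esub> \<in> h ` Q" by simp
    hence "\<one>\<^bsub>A\<^esub> \<in> Q" using bk by simp
    hence "Q = carrier A" by (rule ideal.one_imp_carrier[OF Qi])
    with Qne show False ..
  qed
  moreover have "\<forall>I J. ideal I B \<longrightarrow> ideal J B \<longrightarrow>
        (\<forall>a\<in>I. \<forall>b\<in>J. a \<otimes>\<^bsub>B\<^esub> b \<in> h ` Q) \<longrightarrow> I \<subseteq> h ` Q \<or> J \<subseteq> h ` Q"
  proof (intro allI impI)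
    fix I J assume I: "ideal I B" and J: "ideal J B"
      and prod: "\<forall>a\<in>I. \<forall>b\<in>J. a \<otimes>\<^bsub>B\<^esub> b \<in> h ` Q"
    have Ic: "I \<subseteq> carrier B" using ideal.axioms(1)[OF I] additive_subgroup.a_subset by blast
    have Jc: "J \<subseteq> carrier B" using ideal.axioms(1)[OF J] additive_subgroup.a_subset by blast
    have "\<forall>a\<in>{a \<in> carrier A. h a \<in> I}. \<forall>b\<in>{a \<in> carrier A. h a \<in> J}. a \<otimes>\<^bsub>A\<^esub> b \<in> Q"
    proof (intro ballI)
      fix a b assume a: "a \<in> {a \<in> carrier A. h a \<in> I}" and b: "b \<in> {a \<in> carrier A. h a \<in> J}"
      hence "h (a \<otimes>\<^bsub>A\<^esub> b) \<in> h ` Q" using prod by auto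
      thus "a \<otimes>\<^bsub>A\<^esub> b \<in> Q" using bk a b by auto
    qed
    hence "{a \<in> carrier A. h a \<in> I} \<subseteq> Q \<or> {a \<in> carrier A. h a \<in> J} \<subseteq> Q"
      using Qp H.ideal_vimage[OF I] H.ideal_vimage[OF J] by blast
    moreover have "\<And>x. x \<in> carrier B \<Longrightarrow> \<exists>a\<in>carrier A. x = h a" using surj by blast
    ultimately show "I \<subseteq> h ` Q \<or> J \<subseteq> h ` Q" using Ic Jc by blast
  qed
  ultimately show ?thesis unfolding nc_prime_ideal_def by blast
qed

lemma radical_char:
  assumes hom: "ring_hom_ring A B h" and surj: "h ` carrier A = carrier B"
    and ker: "\<And>Q a. nc_prime_ideal A Q \<Longrightarrow> a \<in> carrier A \<Longrightarrow> h a = \<zero>\<^bsub>B\<^esub> \<Longrightarrow> a \<in> Q"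
    and x: "x \<in> carrier A"
  shows "x \<in> prime_radical A \<longleftrightarrow> h x \<in> prime_radical B"
proof
  interpret H: ring_hom_ring A B h by fact
  assume xr: "x \<in> prime_radical A"
  show "h x \<in> prime_radical B" unfolding prime_radical_def
  proof (intro CollectI conjI allI impI)
    show "h x \<in> carrier B" using x by simp
    fix P assume "nc_prime_ideal B P"
    hence "nc_prime_ideal A {a \<in> carrier A. h a \<in> P}" by (rule prime_vimage[OF hom surj])
    thus "h x \<in> P" using xr unfolding prime_radical_def by blast
  qed
next
  assume hr: "h x \<in> prime_radical B"
  show "x \<in> prime_radical A" unfolding prime_radical_def
  proof (intro CollectI conjI allI impI)
    show "x \<in> carrier A" by fact
    fix Q assume Q: "nc_prime_ideal A Q"
    hence "nc_prime_ideal B (h ` Q)" using prime_img[OF hom surj Q] ker by blast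
    hence "h x \<in> h ` Q" using hr unfolding prime_radical_def by blast
    moreover have "ideal Q A" using Q unfolding nc_prime_ideal_def by blast
    ultimately show "x \<in> Q" using back_mem[OF hom _ _ x] ker[OF Q] by blast
  qed
qed



definition Jt :: "('a, 'b) ring_scheme \<Rightarrow> nat \<Rightarrow> (nat \<Rightarrow> 'a) set" where
  "Jt R m = {p \<in> carrier (UP R). \<forall>i<m. coeff (UP R) p i = \<zero>\<^bsub>R\<^esub>}"

definition hq :: "('a, 'b) ring_scheme \<Rightarrow> (nat \<Rightarrow> 'a) set \<Rightarrow> 'a" where
  "hq R C = coeff (UP R) (SOME p. p \<in> C) 0"

lemma coeff_UP: "F \<in> carrier (UP A) \<Longrightarrow> coeff (UP A) F k = F k"
  by (simp add: UP_def)

lemma carrier_UP: "carrier (UP A) = up A"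
  by (simp add: UP_def)

locale trunc = UP_ring +
  fixes n :: nat
  assumes n1: "1 \<le> n"
begin

abbreviation "I \<equiv> genideal P {up_ring.monom P \<one> n}"
abbreviation "S \<equiv> P Quot I"

lemma Jt_eq: "Jt R m = {p \<in> carrier P. \<forall>i<m. up_ring.coeff P p i = \<zero>}"
  by (simp add: Jt_def P_def)

lemma hq_eq: "hq R C = up_ring.coeff P (SOME p. p \<in> C) 0"
  by (simp add: hq_def P_def)

lemma I_ideal: "ideal I P"
  by (rule P.genideal_ideal) simp

lemma ring_S: "ring S"
  by (rule ideal.quotient_is_ring[OF I_ideal])

lemma J_mult:
  assumes p: "p \<in> Jt R a" and q: "q \<in> Jt R b"
  shows "p \<otimes>\<^bsub>P\<^esub> q \<in> Jt R (a + b)"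
proof -
  have pc: "p \<in> carrier P" and qc: "q \<in> carrier P" using p q by (auto simp: Jt_eq)
  have pz: "\<And>i. i < a \<Longrightarrow> up_ring.coeff P p i = \<zero>" using p by (auto simp: Jt_eq)
  have qz: "\<And>i. i < b \<Longrightarrow> up_ring.coeff P q i = \<zero>" using q by (auto simp: Jt_eq)
  have "up_ring.coeff P (p \<otimes>\<^bsub>P\<^esub> q) k = \<zero>" if k: "k < a + b" for k
  proof -
    have "(\<Oplus>i \<in> {..k}. up_ring.coeff P p i \<otimes> up_ring.coeff P q (k-i)) = (\<Oplus>i \<in> {..k}. \<zero>)"
    proof (rule R.finsum_cong')
      show "{..k} = {..k}" ..
      show "(\<lambda>i. \<zero>) \<in> {..k} \<rightarrow> carrier R" by simp
      fix i assume "i \<in> {..k}"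
      show "up_ring.coeff P p i \<otimes> up_ring.coeff P q (k-i) = \<zero>"
      proof (cases "i < a")
        case True thus ?thesis using pz qc by simp
      next
        case False hence "k - i < b" using k \<open>i \<in> {..k}\<close> by auto
        thus ?thesis using qz pc by simp
      qed
    qed
    thus ?thesis using pc qc by simp
  qed
  thus ?thesis using pc qc by (simp add: Jt_eq)
qed

lemma J_carrier: "Jt R m \<subseteq> carrier P"
  by (auto simp: Jt_eq)

lemma J0: "Jt R 0 = carrier P"
  by (auto simp: Jt_eq)

lemma J_mono: "m \<le> k \<Longrightarrow> Jt R k \<subseteq> Jt R m"
  by (auto simp: Jt_eq)

lemma J_ideal: "ideal (Jt R m) P"
proof (rule Ideal.idealI)
  show "ring P" by (rule P.ring_axioms)
  show "subgroup (Jt R m) (add_monoid P)"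
  proof (rule P.add.subgroupI)
    show "Jt R m \<subseteq> carrier P" using J_carrier by simp
    have "\<zero>\<^bsub>P\<^esub> \<in> Jt R m" by (simp add: Jt_eq)
    thus "Jt R m \<noteq> {}" by blast
  next
    fix a assume a: "a \<in> Jt R m"
    have ac: "a \<in> carrier P" using a J_carrier by auto
    show "\<ominus>\<^bsub>P\<^esub> a \<in> Jt R m" using a ac by (simp add: Jt_eq)
  next
    fix a b assume a: "a \<in> Jt R m" and b: "b \<in> Jt R m"
    have ac: "a \<in> carrier P" and bc: "b \<in> carrier P" using a b J_carrier by auto
    show "a \<oplus>\<^bsub>P\<^esub> b \<in> Jt R m"
      using a b ac bc by (simp add: Jt_eq)
  qed
next
  fix a x assume a: "a \<in> Jt R m" and x: "x \<in> carrier P"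
  show "x \<otimes>\<^bsub>P\<^esub> a \<in> Jt R m" using J_mult[of x 0 a m] a x J0 by simp
  show "a \<otimes>\<^bsub>P\<^esub> x \<in> Jt R m" using J_mult[of a m x 0] a x J0 by simp
qed

lemma monom_J: "up_ring.monom P \<one> n \<in> Jt R n"
  by (simp add: Jt_eq)

lemma I_sub_J: "I \<subseteq> Jt R n"
  by (rule P.genideal_minimal[OF J_ideal]) (simp add: monom_J)

lemma J_sub_I: "Jt R n \<subseteq> I"
proof
  fix p assume p: "p \<in> Jt R n"
  have pc: "p \<in> carrier P" using p J_carrier by auto
  have cp: "\<And>k. up_ring.coeff P p k = p k" using pc coeff_UP[of p R] unfolding P_def by blast
  have pu: "p \<in> up R" using pc carrier_UP[of R] unfolding P_def by blast
  define q where "q = (\<lambda>k. p (k + n))"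
  have qc: "q \<in> carrier P"
  proof -
    obtain N where N: "bound \<zero> N p" using pu by auto
    have "bound \<zero> N q" using N unfolding q_def bound_def by auto
    moreover have "\<And>k. q k \<in> carrier R" using pu unfolding q_def by auto
    ultimately have "q \<in> up R" by auto
    thus ?thesis using carrier_UP[of R] unfolding P_def by blast
  qed
  have cq: "\<And>k. up_ring.coeff P q k = q k" using qc coeff_UP[of q R] unfolding P_def by blast
  have mc: "up_ring.monom P \<one> n \<in> carrier P" by simp
  have eq: "p = up_ring.monom P \<one> n \<otimes>\<^bsub>P\<^esub> q"
  proof (rule up_eqI)
    show "p \<in> carrier P" by fact
    show "up_ring.monom P \<one> n \<otimes>\<^bsub>P\<^esub> q \<in> carrier P" using qc by simp
    fix k
    show "up_ring.coeff P p k = up_ring.coeff P (up_ring.monom P \<one> n \<otimes>\<^bsub>P\<^esub> q) k"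
    proof (cases "k < n")
      case True
      have "up_ring.monom P \<one> n \<otimes>\<^bsub>P\<^esub> q \<in> Jt R (n + 0)" using J_mult[OF monom_J, of q 0] qc J0 by simp
      thus ?thesis using p True by (simp add: Jt_eq)
    next
      case False
      have "up_ring.coeff P (up_ring.monom P \<one> n \<otimes>\<^bsub>P\<^esub> q) ((k - n) + n) = \<one> \<otimes> up_ring.coeff P q (k - n)"
        by (rule coeff_monom_mult) (simp_all add: qc)
      moreover have "(k - n) + n = k" using False by simp
      moreover have "up_ring.coeff P q (k - n) = p k" using False cq[of "k - n"] unfolding q_def by simp
      moreover have "p k \<in> carrier R" using pu by (rule mem_upD)
      ultimately show ?thesis by (simp add: cp)
    qed
  qed
  have "up_ring.monom P \<one> n \<in> I" by (rule P.genideal_self') simp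
  hence "up_ring.monom P \<one> n \<otimes>\<^bsub>P\<^esub> q \<in> I" using ideal.I_r_closed[OF I_ideal _ qc] by blast
  thus "p \<in> I" using eq by simp
qed

lemma carrier_S: "carrier S = (\<lambda>p. I +>\<^bsub>P\<^esub> p) ` carrier P"
  by (auto simp: FactRing_def A_RCOSETS_def')

lemma rcos_hom: "(\<lambda>p. I +>\<^bsub>P\<^esub> p) \<in> ring_hom P S"
  using ideal.rcos_ring_hom[OF I_ideal] by simp

lemma one_S: "\<one>\<^bsub>S\<^esub> = I +>\<^bsub>P\<^esub> \<one>\<^bsub>P\<^esub>"
  unfolding FactRing_def by (simp only: monoid.select_convs)

lemma zero_S: "\<zero>\<^bsub>S\<^esub> = I"
  unfolding FactRing_def by (simp only: ring.select_convs)

lemma hq_coset: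
  assumes p: "p \<in> carrier P"
  shows "hq R (I +>\<^bsub>P\<^esub> p) = up_ring.coeff P p 0"
proof -
  have Ic: "I \<subseteq> carrier P" using ideal.axioms(1)[OF I_ideal] additive_subgroup.a_subset by blast
  interpret Iid: ideal I P by (rule I_ideal)
  have "p \<in> I +>\<^bsub>P\<^esub> p"
    using Iid.a_rcos_self[OF p] .
  hence "(SOME x. x \<in> I +>\<^bsub>P\<^esub> p) \<in> I +>\<^bsub>P\<^esub> p" by (rule someI[where P="\<lambda>x. x \<in> I +>\<^bsub>P\<^esub> p"])
  then obtain i where i: "i \<in> I" "(SOME x. x \<in> I +>\<^bsub>P\<^esub> p) = i \<oplus>\<^bsub>P\<^esub> p"
    unfolding a_r_coset_def' by blast
  have ic: "i \<in> carrier P" using i Ic by blast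
  have "up_ring.coeff P i 0 = \<zero>" using i(1) I_sub_J n1 by (auto simp: Jt_eq)
  thus ?thesis using i ic p by (simp add: hq_eq)
qed

lemma g_hom_vals:
  assumes "p \<in> carrier P" "q \<in> carrier P"
  shows "up_ring.coeff P (p \<otimes>\<^bsub>P\<^esub> q) 0 = up_ring.coeff P p 0 \<otimes> up_ring.coeff P q 0"
  using assms by simp

lemma carrier_S_E:
  assumes "x \<in> carrier S"
  obtains p where "x = I +>\<^bsub>P\<^esub> p" "p \<in> carrier P"
proof -
  have "x \<in> (\<lambda>p. I +>\<^bsub>P\<^esub> p) ` carrier P" using assms by (simp only: carrier_S)
  then obtain p where "x = I +>\<^bsub>P\<^esub> p" "p \<in> carrier P" by (rule imageE)
  thus ?thesis by (rule that)
qed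

lemma S_mult: assumes p: "p \<in> carrier P" "q \<in> carrier P"
  shows "(I +>\<^bsub>P\<^esub> p) \<otimes>\<^bsub>S\<^esub> (I +>\<^bsub>P\<^esub> q) = I +>\<^bsub>P\<^esub> (p \<otimes>\<^bsub>P\<^esub> q)"
    using ring_hom_mult[OF rcos_hom p(1) p(2)] by simp

lemma S_add: assumes p: "p \<in> carrier P" "q \<in> carrier P"
  shows "(I +>\<^bsub>P\<^esub> p) \<oplus>\<^bsub>S\<^esub> (I +>\<^bsub>P\<^esub> q) = I +>\<^bsub>P\<^esub> (p \<oplus>\<^bsub>P\<^esub> q)"
    using ring_hom_add[OF rcos_hom p(1) p(2)] by simp

lemma hq_closed: assumes "x \<in> carrier S" shows "hq R x \<in> carrier R"
proof -
  obtain p where p: "x = I +>\<^bsub>P\<^esub> p" "p \<in> carrier P" using assms by (rule carrier_S_E)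
  show ?thesis unfolding p(1) hq_coset[OF p(2)] using p(2) by (rule coeff_closed)
qed

lemma hq_mult: assumes "x \<in> carrier S" "y \<in> carrier S"
  shows "hq R (x \<otimes>\<^bsub>S\<^esub> y) = hq R x \<otimes> hq R y"
proof -
  obtain p where p: "x = I +>\<^bsub>P\<^esub> p" "p \<in> carrier P" using assms(1) by (rule carrier_S_E)
  obtain q where q: "y = I +>\<^bsub>P\<^esub> q" "q \<in> carrier P" using assms(2) by (rule carrier_S_E)
  have pq: "p \<otimes>\<^bsub>P\<^esub> q \<in> carrier P" using p(2) q(2) by (rule P.m_closed)
  show ?thesis unfolding p(1) q(1) S_mult[OF p(2) q(2)] hq_coset[OF pq] hq_coset[OF p(2)] hq_coset[OF q(2)]
    by (rule g_hom_vals[OF p(2) q(2)])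
qed

lemma hq_add: assumes "x \<in> carrier S" "y \<in> carrier S"
  shows "hq R (x \<oplus>\<^bsub>S\<^esub> y) = hq R x \<oplus> hq R y"
proof -
  obtain p where p: "x = I +>\<^bsub>P\<^esub> p" "p \<in> carrier P" using assms(1) by (rule carrier_S_E)
  obtain q where q: "y = I +>\<^bsub>P\<^esub> q" "q \<in> carrier P" using assms(2) by (rule carrier_S_E)
  have pq: "p \<oplus>\<^bsub>P\<^esub> q \<in> carrier P" using p(2) q(2) by (rule P.a_closed)
  show ?thesis unfolding p(1) q(1) S_add[OF p(2) q(2)] hq_coset[OF pq] hq_coset[OF p(2)] hq_coset[OF q(2)]
    by (rule coeff_add[OF p(2) q(2)])
qed

lemma hq_one: "hq R \<one>\<^bsub>S\<^esub> = \<one>" unfolding one_S hq_coset[OF P.one_closed] by simp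

lemma hq_hom: "ring_hom_ring S R (hq R)"
  by (rule ring_hom_ringI[OF ring_S R.ring_axioms hq_closed hq_mult hq_add hq_one])

definition iota :: "'a \<Rightarrow> (nat \<Rightarrow> 'a) set" where
  "iota a = I +>\<^bsub>P\<^esub> up_ring.monom P a 0"

lemma iota_hom: "ring_hom_ring R S iota"
proof -
  have eq: "(\<lambda>p. I +>\<^bsub>P\<^esub> p) \<circ> (\<lambda>a. up_ring.monom P a 0) = iota"
    by (rule ext) (simp only: comp_def iota_def)
  have "(\<lambda>p. I +>\<^bsub>P\<^esub> p) \<circ> (\<lambda>a. up_ring.monom P a 0) \<in> ring_hom R S"
    by (rule ring_hom_trans[OF const_ring_hom rcos_hom])
  hence "iota \<in> ring_hom R S" by (simp only: eq)
  thus ?thesis by (rule ring_hom_ringI2[OF R.ring_axioms ring_S])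
qed

lemma hq_iota: assumes a: "a \<in> carrier R" shows "hq R (iota a) = a"
proof -
  have m: "up_ring.monom P a 0 \<in> carrier P" using a by (rule monom_closed)
  show ?thesis unfolding iota_def hq_coset[OF m] using a by (rule coeff_monom[THEN trans]) simp
qed

lemma iota_closed: "a \<in> carrier R \<Longrightarrow> iota a \<in> carrier S"
  by (rule ring_hom_closed[OF ring_hom_ring.homh[OF iota_hom]])

lemma hq_surj: "hq R ` carrier S = carrier R"
proof
  show "hq R ` carrier S \<subseteq> carrier R" using hq_closed by blast
  show "carrier R \<subseteq> hq R ` carrier S"
  proof
    fix a assume a: "a \<in> carrier R"
    show "a \<in> hq R ` carrier S"
      by (rule image_eqI[where x="iota a"]) (simp only: hq_iota[OF a], rule iota_closed[OF a])
  qed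
qed

end



context trunc
begin

abbreviation "K m \<equiv> (\<lambda>p. I +>\<^bsub>P\<^esub> p) ` Jt R m"

lemma K_ideal: "ideal (K m) S"
  by (rule P.ring_ideal_imp_quot_ideal[OF I_ideal J_ideal])

lemma K_mult:
  assumes x: "x \<in> K a" and y: "y \<in> K b"
  shows "x \<otimes>\<^bsub>S\<^esub> y \<in> K (a + b)"
proof -
  obtain p where p: "p \<in> Jt R a" "x = I +>\<^bsub>P\<^esub> p" using x by blast
  obtain q where q: "q \<in> Jt R b" "y = I +>\<^bsub>P\<^esub> q" using y by blast
  have pc: "p \<in> carrier P" and qc: "q \<in> carrier P" using p q J_carrier by auto
  have "x \<otimes>\<^bsub>S\<^esub> y = I +>\<^bsub>P\<^esub> (p \<otimes>\<^bsub>P\<^esub> q)"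
    unfolding p(2) q(2) by (rule S_mult[OF pc qc])
  moreover have "p \<otimes>\<^bsub>P\<^esub> q \<in> Jt R (a + b)" by (rule J_mult[OF p(1) q(1)])
  ultimately show ?thesis by blast
qed

lemma K_n_zero: "K n \<subseteq> {\<zero>\<^bsub>S\<^esub>}"
proof
  interpret Iid: ideal I P by (rule I_ideal)
  fix x assume "x \<in> K n"
  then obtain p where p: "p \<in> Jt R n" "x = I +>\<^bsub>P\<^esub> p" by blast
  have "p \<in> I" using p J_sub_I by blast
  hence "I +>\<^bsub>P\<^esub> p = I" by (rule Iid.a_rcos_const)
  thus "x \<in> {\<zero>\<^bsub>S\<^esub>}" using p zero_S by simp
qed

lemma ker_in_prime:
  assumes Q: "nc_prime_ideal S Q" and x: "x \<in> carrier S" and hx: "hq R x = \<zero>"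
  shows "x \<in> Q"
proof -
  have Qi: "ideal Q S"
    and Qp: "\<And>A B. ideal A S \<Longrightarrow> ideal B S \<Longrightarrow> (\<forall>a\<in>A. \<forall>b\<in>B. a \<otimes>\<^bsub>S\<^esub> b \<in> Q) \<Longrightarrow> A \<subseteq> Q \<or> B \<subseteq> Q"
    using Q unfolding nc_prime_ideal_def by blast+
  have zQ: "\<zero>\<^bsub>S\<^esub> \<in> Q" using additive_subgroup.zero_closed[OF ideal.axioms(1)[OF Qi]] .
  have step: "d < n \<longrightarrow> K (n - d) \<subseteq> Q" for d
  proof (induction d)
    case 0 show ?case using K_n_zero zQ by auto
  next
    case (Suc d)
    show ?case
    proof
      assume d: "Suc d < n"
      define m where "m = n - Suc d"
      have m1: "1 \<le> m" and mm: "m + 1 = n - d" using d by (auto simp: m_def)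
      have IH: "K (n - d) \<subseteq> Q" using Suc.IH d by simp
      have "\<forall>a\<in>K m. \<forall>b\<in>K 1. a \<otimes>\<^bsub>S\<^esub> b \<in> Q"
        using K_mult[of _ m _ 1] mm IH by force
      hence "K m \<subseteq> Q \<or> K 1 \<subseteq> Q" using Qp K_ideal by blast
      moreover have "K m \<subseteq> K 1" using J_mono[OF m1] by blast
      ultimately show "K (n - Suc d) \<subseteq> Q" unfolding m_def by blast
    qed
  qed
  have "K (n - (n - 1)) \<subseteq> Q" using step[of "n - 1"] n1 by simp
  hence K1: "K 1 \<subseteq> Q" using n1 by simp
  obtain p where p: "x = I +>\<^bsub>P\<^esub> p" "p \<in> carrier P" using x by (rule carrier_S_E)
  have "up_ring.coeff P p 0 = \<zero>" using hx unfolding p(1) hq_coset[OF p(2)] .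
  hence "p \<in> Jt R 1" using p(2) by (simp add: Jt_eq)
  hence "x \<in> K 1" unfolding p(1) by (rule imageI)
  thus ?thesis using K1 by blast
qed

lemma rad_S:
  assumes "x \<in> carrier S"
  shows "x \<in> prime_radical S \<longleftrightarrow> hq R x \<in> prime_radical R"
  by (rule radical_char[OF hq_hom hq_surj ker_in_prime assms])

end



lemma ring_l_null: assumes "ring A" "x \<in> carrier A" shows "\<zero>\<^bsub>A\<^esub> \<otimes>\<^bsub>A\<^esub> x = \<zero>\<^bsub>A\<^esub>"
proof - interpret ring A by fact show ?thesis using assms(2) by simp qed

lemma ring_r_null: assumes "ring A" "x \<in> carrier A" shows "x \<otimes>\<^bsub>A\<^esub> \<zero>\<^bsub>A\<^esub> = \<zero>\<^bsub>A\<^esub>"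
proof - interpret ring A by fact show ?thesis using assms(2) by simp qed

lemma ring_m_closed: assumes "ring A" "x \<in> carrier A" "y \<in> carrier A" shows "x \<otimes>\<^bsub>A\<^esub> y \<in> carrier A"
proof - interpret ring A by fact show ?thesis using assms(2,3) by simp qed

lemma zero_UP: "\<zero>\<^bsub>UP A\<^esub> = (\<lambda>k. \<zero>\<^bsub>A\<^esub>)"
  by (simp add: UP_def)

lemma zero_rad: assumes "ring A" shows "\<zero>\<^bsub>A\<^esub> \<in> prime_radical A"
proof -
  interpret ring A by fact
  show ?thesis unfolding prime_radical_def nc_prime_ideal_def
    using additive_subgroup.zero_closed ideal.axioms(1) by auto
qed

lemma map_up:
  assumes hom: "ring_hom_ring A B \<phi>" and F: "F \<in> carrier (UP A)"
  shows "(\<lambda>k. \<phi> (F k)) \<in> carrier (UP B)"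
proof -
  interpret H: ring_hom_ring A B \<phi> by fact
  have Fu: "F \<in> up A" using F by (simp add: UP_def)
  then obtain N where N: "bound \<zero>\<^bsub>A\<^esub> N F" by (auto simp: up_def)
  have Fc: "\<And>k. F k \<in> carrier A" using Fu by (rule mem_upD)
  have "bound \<zero>\<^bsub>B\<^esub> N (\<lambda>k. \<phi> (F k))" using N by (auto simp: bound_def)
  moreover have "\<And>k. \<phi> (F k) \<in> carrier B" using Fc by simp
  ultimately have "(\<lambda>k. \<phi> (F k)) \<in> up B" by (intro mem_upI) auto
  thus ?thesis by (simp add: UP_def)
qed

lemma map_mult:
  assumes hom: "ring_hom_ring A B \<phi>" and F: "F \<in> carrier (UP A)" and G: "G \<in> carrier (UP A)"
  shows "(\<lambda>k. \<phi> ((F \<otimes>\<^bsub>UP A\<^esub> G) k)) = (\<lambda>k. \<phi> (F k)) \<otimes>\<^bsub>UP B\<^esub> (\<lambda>k. \<phi> (G k))"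
proof -
  interpret H: ring_hom_ring A B \<phi> by fact
  have Fu: "F \<in> up A" and Gu: "G \<in> up A" using F G by (simp_all add: UP_def)
  have Fc: "\<And>k. F k \<in> carrier A" using Fu by (rule mem_upD)
  have Gc: "\<And>k. G k \<in> carrier A" using Gu by (rule mem_upD)
  have Fu': "(\<lambda>k. \<phi> (F k)) \<in> up B" and Gu': "(\<lambda>k. \<phi> (G k)) \<in> up B"
    using map_up[OF hom F] map_up[OF hom G] by (simp_all add: UP_def)
  have e1: "F \<otimes>\<^bsub>UP A\<^esub> G = (\<lambda>k. \<Oplus>\<^bsub>A\<^esub>i \<in> {..k}. F i \<otimes>\<^bsub>A\<^esub> G (k-i))"
    using Fu Gu by (simp add: UP_def)
  have e2: "(\<lambda>k. \<phi> (F k)) \<otimes>\<^bsub>UP B\<^esub> (\<lambda>k. \<phi> (G k)) =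
      (\<lambda>k. \<Oplus>\<^bsub>B\<^esub>i \<in> {..k}. \<phi> (F i) \<otimes>\<^bsub>B\<^esub> \<phi> (G (k-i)))"
    using Fu' Gu' by (simp add: UP_def)
  have "\<phi> (\<Oplus>\<^bsub>A\<^esub>i \<in> {..k}. F i \<otimes>\<^bsub>A\<^esub> G (k-i)) = (\<Oplus>\<^bsub>B\<^esub>i \<in> {..k}. \<phi> (F i) \<otimes>\<^bsub>B\<^esub> \<phi> (G (k-i)))" for k
  proof -
    have "\<phi> (\<Oplus>\<^bsub>A\<^esub>i \<in> {..k}. F i \<otimes>\<^bsub>A\<^esub> G (k-i)) = (\<Oplus>\<^bsub>B\<^esub>i \<in> {..k}. \<phi> (F i \<otimes>\<^bsub>A\<^esub> G (k-i)))"
      using H.hom_finsum[of "\<lambda>i. F i \<otimes>\<^bsub>A\<^esub> G (k-i)" "{..k}"] Fc Gc by (simp add: comp_def)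
    also have "\<dots> = (\<Oplus>\<^bsub>B\<^esub>i \<in> {..k}. \<phi> (F i) \<otimes>\<^bsub>B\<^esub> \<phi> (G (k-i)))"
      using Fc Gc by (intro H.S.finsum_cong') auto
    finally show ?thesis .
  qed
  thus ?thesis using e1 e2 by simp
qed

theorem theorem2p1:
  fixes R :: "('a, 'b) ring_scheme" and n :: nat
  assumes "ring R" and "n \<ge> 2"
  shows "almost_armendariz R \<longleftrightarrow> almost_armendariz (trunc_poly_ring R n)"
proof -
  interpret T: trunc R "UP R" n
    using assms by (auto intro!: trunc.intro UP_ring.intro trunc_axioms.intro)
  interpret US: UP_ring T.S "UP T.S"
    using T.ring_S by (rule UP_ring.intro)
  have Seq: "trunc_poly_ring R n = T.S" by (simp add: trunc_poly_ring_def)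
  have hqh: "ring_hom_ring T.S R (hq R)" by (rule T.hq_hom)
  have ih: "ring_hom_ring R T.S T.iota" by (rule T.iota_hom)
  have hz1: "hq R \<zero>\<^bsub>T.S\<^esub> = \<zero>\<^bsub>R\<^esub>"
    by (rule ring_hom_zero[OF ring_hom_ring.homh[OF hqh] T.ring_S assms(1)])
  have hz2: "T.iota \<zero>\<^bsub>R\<^esub> = \<zero>\<^bsub>T.S\<^esub>"
    by (rule ring_hom_zero[OF ring_hom_ring.homh[OF ih] assms(1) T.ring_S])
  show ?thesis unfolding Seq
  proof
    assume AR: "almost_armendariz R"
    have AR': "\<And>f g. f \<in> carrier (UP R) \<Longrightarrow> g \<in> carrier (UP R) \<Longrightarrow> f \<otimes>\<^bsub>UP R\<^esub> g = \<zero>\<^bsub>UP R\<^esub> \<Longrightarrow>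
        (\<forall>i \<le> deg R f. \<forall>j \<le> deg R g. coeff (UP R) f i \<otimes>\<^bsub>R\<^esub> coeff (UP R) g j \<in> prime_radical R)"
      using AR unfolding almost_armendariz_def by blast
    show "almost_armendariz T.S" unfolding almost_armendariz_def
    proof (intro ballI impI allI)
      fix F G i j
      assume F: "F \<in> carrier (UP T.S)" and G: "G \<in> carrier (UP T.S)"
        and FG: "F \<otimes>\<^bsub>UP T.S\<^esub> G = \<zero>\<^bsub>UP T.S\<^esub>" and i: "i \<le> deg T.S F" and j: "j \<le> deg T.S G"
      define f where "f = (\<lambda>k. hq R (F k))"
      define g where "g = (\<lambda>k. hq R (G k))"
      have fc: "f \<in> carrier (UP R)" unfolding f_def by (rule map_up[OF hqh F])
      have gc: "g \<in> carrier (UP R)" unfolding g_def by (rule map_up[OF hqh G])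
      have Fc: "\<And>k. F k \<in> carrier T.S" using F unfolding carrier_UP by (rule mem_upD)
      have Gc: "\<And>k. G k \<in> carrier T.S" using G unfolding carrier_UP by (rule mem_upD)
      have fk: "\<And>k. f k \<in> carrier R" using fc unfolding carrier_UP by (rule mem_upD)
      have gk: "\<And>k. g k \<in> carrier R" using gc unfolding carrier_UP by (rule mem_upD)
      have "f \<otimes>\<^bsub>UP R\<^esub> g = (\<lambda>k. hq R ((F \<otimes>\<^bsub>UP T.S\<^esub> G) k))"
        unfolding f_def g_def by (rule map_mult[OF hqh F G, symmetric])
      also have "\<dots> = \<zero>\<^bsub>UP R\<^esub>"
        by (simp only: FG zero_UP hz1)
      finally have fg: "f \<otimes>\<^bsub>UP R\<^esub> g = \<zero>\<^bsub>UP R\<^esub>" .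
      have key: "f i \<otimes>\<^bsub>R\<^esub> g j \<in> prime_radical R"
      proof (cases "i \<le> deg R f \<and> j \<le> deg R g")
        case True
        hence "coeff (UP R) f i \<otimes>\<^bsub>R\<^esub> coeff (UP R) g j \<in> prime_radical R"
          using AR'[OF fc gc fg] by blast
        thus ?thesis unfolding coeff_UP[OF fc] coeff_UP[OF gc] .
      next
        case False
        hence "deg R f < i \<or> deg R g < j" by linarith
        hence "f i = \<zero>\<^bsub>R\<^esub> \<or> g j = \<zero>\<^bsub>R\<^esub>"
        proof
          assume "deg R f < i"
          hence "coeff (UP R) f i = \<zero>\<^bsub>R\<^esub>" using fc by (rule T.deg_aboveD)
          thus ?thesis unfolding coeff_UP[OF fc] ..
        next
          assume "deg R g < j"
          hence "coeff (UP R) g j = \<zero>\<^bsub>R\<^esub>" using gc by (rule T.deg_aboveD)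
          thus ?thesis unfolding coeff_UP[OF gc] ..
        qed
        hence "f i \<otimes>\<^bsub>R\<^esub> g j = \<zero>\<^bsub>R\<^esub>"
        proof
          assume "f i = \<zero>\<^bsub>R\<^esub>" thus ?thesis using ring_l_null[OF assms(1) gk] by simp
        next
          assume "g j = \<zero>\<^bsub>R\<^esub>" thus ?thesis using ring_r_null[OF assms(1) fk] by simp
        qed
        thus ?thesis using zero_rad[OF assms(1)] by simp
      qed
      have c: "F i \<otimes>\<^bsub>T.S\<^esub> G j \<in> carrier T.S" by (rule ring_m_closed[OF T.ring_S Fc Gc])
      have "hq R (F i \<otimes>\<^bsub>T.S\<^esub> G j) = f i \<otimes>\<^bsub>R\<^esub> g j"
        unfolding f_def g_def by (rule T.hq_mult[OF Fc Gc])
      hence "hq R (F i \<otimes>\<^bsub>T.S\<^esub> G j) \<in> prime_radical R" using key by simp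
      hence "F i \<otimes>\<^bsub>T.S\<^esub> G j \<in> prime_radical T.S" using T.rad_S[OF c] by blast
      thus "coeff (UP T.S) F i \<otimes>\<^bsub>T.S\<^esub> coeff (UP T.S) G j \<in> prime_radical T.S"
        unfolding coeff_UP[OF F] coeff_UP[OF G] .
    qed
  next
    assume AS: "almost_armendariz T.S"
    have AS': "\<And>F G. F \<in> carrier (UP T.S) \<Longrightarrow> G \<in> carrier (UP T.S) \<Longrightarrow> F \<otimes>\<^bsub>UP T.S\<^esub> G = \<zero>\<^bsub>UP T.S\<^esub> \<Longrightarrow>
        (\<forall>i \<le> deg T.S F. \<forall>j \<le> deg T.S G. coeff (UP T.S) F i \<otimes>\<^bsub>T.S\<^esub> coeff (UP T.S) G j \<in> prime_radical T.S)"
      using AS unfolding almost_armendariz_def by blast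
    show "almost_armendariz R" unfolding almost_armendariz_def
    proof (intro ballI impI allI)
      fix f g i j
      assume f: "f \<in> carrier (UP R)" and g: "g \<in> carrier (UP R)"
        and fg: "f \<otimes>\<^bsub>UP R\<^esub> g = \<zero>\<^bsub>UP R\<^esub>" and i: "i \<le> deg R f" and j: "j \<le> deg R g"
      define F where "F = (\<lambda>k. T.iota (f k))"
      define G where "G = (\<lambda>k. T.iota (g k))"
      have Fc: "F \<in> carrier (UP T.S)" unfolding F_def by (rule map_up[OF ih f])
      have Gc: "G \<in> carrier (UP T.S)" unfolding G_def by (rule map_up[OF ih g])
      have fk: "\<And>k. f k \<in> carrier R" using f unfolding carrier_UP by (rule mem_upD)
      have gk: "\<And>k. g k \<in> carrier R" using g unfolding carrier_UP by (rule mem_upD)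
      have Fk: "\<And>k. F k \<in> carrier T.S" using Fc unfolding carrier_UP by (rule mem_upD)
      have Gk: "\<And>k. G k \<in> carrier T.S" using Gc unfolding carrier_UP by (rule mem_upD)
      have "F \<otimes>\<^bsub>UP T.S\<^esub> G = (\<lambda>k. T.iota ((f \<otimes>\<^bsub>UP R\<^esub> g) k))"
        unfolding F_def G_def by (rule map_mult[OF ih f g, symmetric])
      also have "\<dots> = \<zero>\<^bsub>UP T.S\<^esub>"
        by (simp only: fg zero_UP hz2)
      finally have FG: "F \<otimes>\<^bsub>UP T.S\<^esub> G = \<zero>\<^bsub>UP T.S\<^esub>" .
      have key: "F i \<otimes>\<^bsub>T.S\<^esub> G j \<in> prime_radical T.S"
      proof (cases "i \<le> deg T.S F \<and> j \<le> deg T.S G")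
        case True
        hence "coeff (UP T.S) F i \<otimes>\<^bsub>T.S\<^esub> coeff (UP T.S) G j \<in> prime_radical T.S"
          using AS'[OF Fc Gc FG] by blast
        thus ?thesis unfolding coeff_UP[OF Fc] coeff_UP[OF Gc] .
      next
        case False
        hence "deg T.S F < i \<or> deg T.S G < j" by linarith
        hence "F i = \<zero>\<^bsub>T.S\<^esub> \<or> G j = \<zero>\<^bsub>T.S\<^esub>"
        proof
          assume "deg T.S F < i"
          hence "coeff (UP T.S) F i = \<zero>\<^bsub>T.S\<^esub>" using Fc by (rule US.deg_aboveD)
          thus ?thesis unfolding coeff_UP[OF Fc] ..
        next
          assume "deg T.S G < j"
          hence "coeff (UP T.S) G j = \<zero>\<^bsub>T.S\<^esub>" using Gc by (rule US.deg_aboveD)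
          thus ?thesis unfolding coeff_UP[OF Gc] ..
        qed
        hence "F i \<otimes>\<^bsub>T.S\<^esub> G j = \<zero>\<^bsub>T.S\<^esub>"
        proof
          assume "F i = \<zero>\<^bsub>T.S\<^esub>" thus ?thesis using ring_l_null[OF T.ring_S Gk] by simp
        next
          assume "G j = \<zero>\<^bsub>T.S\<^esub>" thus ?thesis using ring_r_null[OF T.ring_S Fk] by simp
        qed
        thus ?thesis using zero_rad[OF T.ring_S] by simp
      qed
      have c: "F i \<otimes>\<^bsub>T.S\<^esub> G j \<in> carrier T.S" by (rule ring_m_closed[OF T.ring_S Fk Gk])
      have "hq R (F i \<otimes>\<^bsub>T.S\<^esub> G j) \<in> prime_radical R" using T.rad_S[OF c] key by blast
      moreover have "F i \<otimes>\<^bsub>T.S\<^esub> G j = T.iota (f i \<otimes>\<^bsub>R\<^esub> g j)"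
        unfolding F_def G_def by (rule ring_hom_mult[OF ring_hom_ring.homh[OF ih] fk gk, symmetric])
      moreover have "hq R (T.iota (f i \<otimes>\<^bsub>R\<^esub> g j)) = f i \<otimes>\<^bsub>R\<^esub> g j"
        by (rule T.hq_iota[OF ring_m_closed[OF assms(1) fk gk]])
      ultimately have "f i \<otimes>\<^bsub>R\<^esub> g j \<in> prime_radical R" by simp
      thus "coeff (UP R) f i \<otimes>\<^bsub>R\<^esub> coeff (UP R) g j \<in> prime_radical R"
        unfolding coeff_UP[OF f] coeff_UP[OF g] .
    qed
  qed
qed

end
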